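(* Let $X$ be a random variable with distribution $P$ on $\mathbb{Z}_+=\{0,1,2,\dots\}$ and mean $E(X)=\lambda>0$. Suppose that either $P(k)>0$ for all $k\in\mathbb{Z}_+$, or there is $N\in\mathbb{Z}_+$ with $P(k)=0$ for all $k>N$. Then $$D(P\,\|\,\mathrm{Po}(\lambda))\le K(X).$$
   Context: For a random variable $X$ with distribution $P$ on $\mathbb{Z}_+$ and mean $\lambda>0$, the scaled score function is $\rho_X(x)=\frac{(x+1)P(x+1)}{\lambda P(x)}-1$ and the scaled Fisher information is $K(X)=\lambda E[\rho_X(X)^2]$, i.e. $K(X)=\lambda\sum_{x\ge0}\frac{\big(\frac{(x+1)P(x+1)}{\lambda}-P(x)\big)^2}{P(x)}$, with the conventions $0/0=0$ and $c/0=\infty$ for $c>0$. $\mathrm{Po}(\lambda)$ is the Poisson distribution with mean $\lambda$, and $D(P\|Q)=\sum_x P(x)\log\frac{P(x)}{Q(x)}$ is the relative entropy (natural logarithm, conventions $0\log(0/a)=0$, $a\log(a/0)=\infty$). *)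

theory Defs
  imports "HOL-Probability.Probability"
begin

definition poisson :: "real \<Rightarrow> nat \<Rightarrow> real" where
  "poisson lam k = exp (- lam) * lam ^ k / fact k"

text \<open>For probability mass
  functions the negative parts of the terms are always summable, so a
  non-(absolutely)-summable series diverges to +infinity.\<close>
definition rel_entropy :: "(nat \<Rightarrow> real) \<Rightarrow> (nat \<Rightarrow> real) \<Rightarrow> ereal" where
  "rel_entropy P Q =
     (if \<exists>x. P x > 0 \<and> Q x = 0 then \<infinity>
      else if (\<lambda>x. P x * ln (P x / Q x)) summable_on UNIV
           then ereal (\<Sum>\<^sub>\<infinity>x. P x * ln (P x / Q x))
           else \<infinity>)"

definition sfi_term :: "(nat \<Rightarrow> real) \<Rightarrow> real \<Rightarrow> nat \<Rightarrow> ennreal" where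
  "sfi_term P lam x =
     (let c = ((real x + 1) * P (x + 1) / lam - P x)\<^sup>2 in
      if P x = 0 then (if c = 0 then 0 else \<infinity>) else ennreal (c / P x))"

definition scaled_fisher :: "(nat \<Rightarrow> real) \<Rightarrow> real \<Rightarrow> ennreal" where
  "scaled_fisher P lam = ennreal lam * (\<Sum>x. sfi_term P lam x)"

end

theory Submission
  imports Defs
begin

definition Bn :: "real \<Rightarrow> nat \<Rightarrow> nat \<Rightarrow> real" where
  "Bn p n k = real (n choose k) * p ^ k * (1 - p) ^ (n - k)"

definition En :: "real \<Rightarrow> nat \<Rightarrow> (nat \<Rightarrow> real) \<Rightarrow> real" where
  "En p n h = (\<Sum>k\<le>n. Bn p n k * h k)"

lemma Bn_nonneg: "0 \<le> p \<Longrightarrow> p \<le> 1 \<Longrightarrow> 0 \<le> Bn p n k"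
  by (simp add: Bn_def)

lemma Bn_pos: "0 < p \<Longrightarrow> p < 1 \<Longrightarrow> k \<le> n \<Longrightarrow> 0 < Bn p n k"
  by (simp add: Bn_def)

lemma Bn_big: "n < k \<Longrightarrow> Bn p n k = 0"
  by (simp add: Bn_def)

lemma Bn_Suc0: "Bn p (Suc n) 0 = (1-p) * Bn p n 0"
  by (simp add: Bn_def)

lemma Bn_SucSuc: "Bn p (Suc n) (Suc k) = (1-p) * Bn p n (Suc k) + p * Bn p n k"
proof (cases "k < n")
  case True
  then have e: "Suc n - Suc k = Suc (n - Suc k)" "n - k = Suc (n - Suc k)" by auto
  show ?thesis unfolding Bn_def e by (simp add: algebra_simps)
next
  case False
  show ?thesis
  proof (cases "k = n")
    case True
    then show ?thesis by (simp add: Bn_def)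
  next
    case False
    with \<open>\<not> k < n\<close> have "n < k" by auto
    then show ?thesis by (simp add: Bn_def binomial_eq_0)
  qed
qed

lemma En_Suc: "En p (Suc n) h = (1-p) * En p n h + p * En p n (\<lambda>k. h (Suc k))"
proof -
  have "En p (Suc n) h = Bn p (Suc n) 0 * h 0 + (\<Sum>k\<le>n. Bn p (Suc n) (Suc k) * h (Suc k))"
    unfolding En_def by (rule sum.atMost_Suc_shift)
  also have "(\<Sum>k\<le>n. Bn p (Suc n) (Suc k) * h (Suc k)) = (\<Sum>k\<le>n. (1-p) * (Bn p n (Suc k) * h (Suc k)) + p * (Bn p n k * h (Suc k)))"
    by (intro sum.cong) (auto simp: Bn_SucSuc algebra_simps)
  also have "\<dots> = (1-p) * (\<Sum>k\<le>n. Bn p n (Suc k) * h (Suc k)) + p * (\<Sum>k\<le>n. Bn p n k * h (Suc k))"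
    by (simp add: sum.distrib sum_distrib_left)
  also have "Bn p (Suc n) 0 * h 0 + ((1-p) * (\<Sum>k\<le>n. Bn p n (Suc k) * h (Suc k)) + p * (\<Sum>k\<le>n. Bn p n k * h (Suc k)))
     = (1-p) * (Bn p n 0 * h 0 + (\<Sum>k\<le>n. Bn p n (Suc k) * h (Suc k)))
      + p * (\<Sum>k\<le>n. Bn p n k * h (Suc k))"
    by (simp add: Bn_Suc0 algebra_simps)
  also have "Bn p n 0 * h 0 + (\<Sum>k\<le>n. Bn p n (Suc k) * h (Suc k)) = (\<Sum>k\<le>Suc n. Bn p n k * h k)"
    by (rule sum.atMost_Suc_shift[symmetric])
  also have "\<dots> = En p n h" by (simp add: En_def Bn_big)
  finally show ?thesis by (simp add: En_def)
qed

lemma bern: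
  fixes p a b :: real
  assumes p: "0 \<le> p" "p < 1" and ab: "0 \<le> a" "0 \<le> b" "a = 0 \<longrightarrow> b = 0"
  shows "(1-p) * (a * ln a) + p * (b * ln b) - ((1-p)*a + p*b) * ln ((1-p)*a + p*b) \<le> p * (b-a)^2 / a"
proof (cases "a = 0")
  case True then show ?thesis using ab by simp
next
  case False
  then have a: "a > 0" using ab by auto
  define m where "m = (1-p)*a + p*b"
  have m: "m > 0"
  proof -
    have "(1-p)*a > 0" using a p by simp
    moreover have "p*b \<ge> 0" using p ab by simp
    ultimately show ?thesis unfolding m_def by linarith
  qed
  have s1: "m * ln (a/m) \<le> a - m"
  proof -
    have "ln (a/m) \<le> a/m - 1" using a m by (intro ln_le_minus_one) auto
    then have "m * ln (a/m) \<le> m * (a/m - 1)" using m by (simp add: mult_left_mono)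
    also have "\<dots> = a - m" using m by (simp add: field_simps)
    finally show ?thesis .
  qed
  have s2: "b * ln (b/a) \<le> b * (b-a) / a"
  proof (cases "b = 0")
    case True then show ?thesis by simp
  next
    case False
    then have b: "b > 0" using ab by auto
    have "ln (b/a) \<le> b/a - 1" using a b by (intro ln_le_minus_one) auto
    then have "b * ln (b/a) \<le> b * (b/a - 1)" using b by (simp add: mult_left_mono)
    also have "\<dots> = b * (b-a) / a" using a by (simp add: field_simps)
    finally show ?thesis .
  qed
  have eq: "(1-p) * (a * ln a) + p * (b * ln b) - m * ln m = m * ln (a/m) + p * (b * ln (b/a))"
  proof (cases "b = 0")
    case True then show ?thesis using a m by (simp add: m_def ln_div algebra_simps)
  next
    case False
    then have b: "b > 0" using ab by auto
    show ?thesis using a b m by (simp add: m_def ln_div algebra_simps)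
  qed
  have "(1-p) * (a * ln a) + p * (b * ln b) - m * ln m \<le> (a - m) + p * (b * (b-a) / a)"
  proof -
    have "p * (b * ln (b/a)) \<le> p * (b * (b-a) / a)" using s2 p by (intro mult_left_mono) auto
    then show ?thesis unfolding eq using s1 by linarith
  qed
  also have "\<dots> = p * (b-a)^2 / a" using a by (simp add: m_def field_simps power2_eq_square)
  finally show ?thesis by (simp add: m_def)
qed

lemma titu:
  fixes w a x :: "nat \<Rightarrow> real"
  assumes "finite A" "\<And>i. i \<in> A \<Longrightarrow> 0 \<le> w i" "\<And>i. i \<in> A \<Longrightarrow> 0 \<le> a i"
    "\<And>i. i \<in> A \<Longrightarrow> a i = 0 \<Longrightarrow> x i = 0"
  shows "(\<Sum>i\<in>A. w i * x i)^2 / (\<Sum>i\<in>A. w i * a i) \<le> (\<Sum>i\<in>A. w i * (x i ^ 2 / a i))"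
proof -
  define W where "W = (\<Sum>i\<in>A. w i * a i)"
  define X where "X = (\<Sum>i\<in>A. w i * x i)"
  define R where "R = (\<Sum>i\<in>A. w i * (x i ^ 2 / a i))"
  have R0: "0 \<le> R" unfolding R_def using assms by (intro sum_nonneg) auto
  have W0: "0 \<le> W" unfolding W_def using assms by (intro sum_nonneg) auto
  show ?thesis
  proof (cases "W = 0")
    case True
    have "X^2 / W = 0" using True by simp
    then show ?thesis using R0 unfolding X_def W_def R_def by linarith
  next
    case False
    then have Wp: "W > 0" using W0 by auto
    define t where "t = X / W"
    have tm: "w i * ((x i - t * a i)^2 / a i) = w i * (x i ^ 2 / a i) - 2 * t * (w i * x i) + t^2 * (w i * a i)"
      if "i \<in> A" for i
    proof (cases "a i = 0")
      case True then show ?thesis using assms(4)[OF that] by simp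
    next
      case False then show ?thesis by (simp add: field_simps power2_eq_square)
    qed
    have "0 \<le> (\<Sum>i\<in>A. w i * ((x i - t * a i)^2 / a i))"
      using assms by (intro sum_nonneg mult_nonneg_nonneg divide_nonneg_nonneg) auto
    also have "\<dots> = (\<Sum>i\<in>A. w i * (x i ^ 2 / a i) - 2 * t * (w i * x i) + t^2 * (w i * a i))"
      by (intro sum.cong refl tm)
    also have "\<dots> = R - 2 * t * X + t^2 * W"
      by (simp add: sum.distrib sum_subtractf sum_distrib_left R_def X_def W_def)
    also have "\<dots> = R - X^2 / W" using Wp by (simp add: t_def field_simps power2_eq_square)
    finally have "X^2 / W \<le> R" by simp
    then show ?thesis unfolding X_def W_def R_def .
  qed
qed

lemma BL:
  assumes p: "0 < p" "p < 1"
  shows "(\<forall>k. 0 \<le> f k) \<Longrightarrow> (\<forall>k. f k = 0 \<longrightarrow> f (Suc k) = 0) \<Longrightarrow>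
    En p n (\<lambda>k. f k * ln (f k)) - En p n f * ln (En p n f)
      \<le> (real n * p / (1-p)) * En p n (\<lambda>k. (f (Suc k) - f k)^2 / f k)"
proof (induction n arbitrary: f)
  case 0 then show ?case by (simp add: En_def Bn_def)
next
  case (Suc n f)
  define fS where "fS = (\<lambda>k. f (Suc k))"
  define g0 where "g0 = En p n f"
  define g1 where "g1 = En p n fS"
  define Phi where "Phi h = En p n (\<lambda>k. (h (Suc k) - h k)^2 / h k)" for h
  define c where "c = real n * p / (1-p)"
  have fS1: "\<forall>k. 0 \<le> fS k" "\<forall>k. fS k = 0 \<longrightarrow> fS (Suc k) = 0" using Suc.prems unfolding fS_def by auto
  have IH1: "En p n (\<lambda>k. f k * ln (f k)) - g0 * ln g0 \<le> c * Phi f"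
    using Suc.IH[of f, OF Suc.prems] unfolding g0_def c_def Phi_def .
  have IH2: "En p n (\<lambda>k. fS k * ln (fS k)) - g1 * ln g1 \<le> c * Phi fS"
    using Suc.IH[of fS, OF fS1] unfolding g1_def c_def Phi_def .
  have g0nn: "0 \<le> g0" unfolding g0_def En_def using Suc.prems p
    by (intro sum_nonneg mult_nonneg_nonneg Bn_nonneg) auto
  have g1nn: "0 \<le> g1" unfolding g1_def En_def using fS1 p
    by (intro sum_nonneg mult_nonneg_nonneg Bn_nonneg) auto
  have g01: "g0 = 0 \<longrightarrow> g1 = 0"
  proof
    assume "g0 = 0"
    then have "\<forall>k\<in>{..n}. Bn p n k * f k = 0" unfolding g0_def En_def using Suc.prems p
      by (subst sum_nonneg_eq_0_iff[symmetric]) (auto intro!: mult_nonneg_nonneg Bn_nonneg)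
    then have "\<forall>k\<in>{..n}. f k = 0"
    proof (intro ballI)
      fix k assume k: "k \<in> {..n}" and z: "\<forall>k\<in>{..n}. Bn p n k * f k = 0"
      have "Bn p n k > 0" using Bn_pos[OF p] k by auto
      moreover from z k have "Bn p n k * f k = 0" by blast
      ultimately show "f k = 0" by simp
    qed
    then have "\<forall>k\<in>{..n}. fS k = 0" using Suc.prems unfolding fS_def by auto
    then show "g1 = 0" unfolding g1_def En_def by simp
  qed
  have B: "(1-p) * (g0 * ln g0) + p * (g1 * ln g1) - ((1-p)*g0 + p*g1) * ln ((1-p)*g0 + p*g1) \<le> p * (g1-g0)^2 / g0"
    by (rule bern) (use p g0nn g1nn g01 in auto)
  have T: "(g1-g0)^2 / g0 \<le> Phi f"
  proof -
    have e1: "g1 - g0 = (\<Sum>k\<le>n. Bn p n k * (f (Suc k) - f k))"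
      unfolding g1_def g0_def En_def fS_def by (simp add: sum_subtractf algebra_simps)
    have e2: "g0 = (\<Sum>k\<le>n. Bn p n k * f k)" unfolding g0_def En_def ..
    have e3: "Phi f = (\<Sum>k\<le>n. Bn p n k * ((f (Suc k) - f k)^2 / f k))" unfolding Phi_def En_def ..
    have tt: "(\<Sum>k\<le>n. Bn p n k * (f (Suc k) - f k))^2 / (\<Sum>k\<le>n. Bn p n k * f k)
        \<le> (\<Sum>k\<le>n. Bn p n k * ((f (Suc k) - f k)^2 / f k))"
      by (rule titu) (use Suc.prems p Bn_nonneg in auto)
    show ?thesis using tt unfolding e1[symmetric] e2[symmetric] e3[symmetric] .
  qed
  have P0: "0 \<le> Phi fS" unfolding Phi_def En_def using fS1 p
    by (intro sum_nonneg mult_nonneg_nonneg Bn_nonneg divide_nonneg_nonneg) auto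
  have E1: "En p (Suc n) (\<lambda>k. f k * ln (f k)) = (1-p) * En p n (\<lambda>k. f k * ln (f k)) + p * En p n (\<lambda>k. fS k * ln (fS k))"
    by (simp only: En_Suc fS_def)
  have E2: "En p (Suc n) f = (1-p)*g0 + p*g1" by (simp only: En_Suc g0_def g1_def fS_def)
  have E3: "En p (Suc n) (\<lambda>k. (f (Suc k) - f k)^2 / f k) = (1-p) * Phi f + p * Phi fS"
    by (simp only: En_Suc Phi_def fS_def)
  have c1: "real (Suc n) * p / (1-p) = c + p/(1-p)"
  proof -
    have "real (Suc n) * p / (1-p) = (real n * p + p)/(1-p)" by (simp add: algebra_simps)
    also have "\<dots> = c + p/(1-p)" unfolding c_def by (rule add_divide_distrib)
    finally show ?thesis .
  qed
  have step: "(1-p)*(c*Phi f) + p*(c*Phi fS) + p*Phi f \<le> (c + p/(1-p)) * ((1-p)*Phi f + p*Phi fS)"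
  proof -
    define r where "r = p/(1-p)"
    have q: "r*(1-p) = p" using p unfolding r_def by simp
    have r0: "0 \<le> r" using p unfolding r_def by simp
    have "(c + r) * ((1-p)*Phi f + p*Phi fS) = (1-p)*(c*Phi f) + p*(c*Phi fS) + (r*(1-p))*Phi f + (r*p)*Phi fS"
      by (simp add: algebra_simps)
    then have "(c + p/(1-p)) * ((1-p)*Phi f + p*Phi fS) = (1-p)*(c*Phi f) + p*(c*Phi fS) + p*Phi f + (r*p)*Phi fS"
      unfolding q by (simp add: r_def)
    moreover have "0 \<le> (r*p)*Phi fS" using p P0 r0 by simp
    ultimately show ?thesis by linarith
  qed
  have "En p (Suc n) (\<lambda>k. f k * ln (f k)) - En p (Suc n) f * ln (En p (Suc n) f)
     = (1-p) * (En p n (\<lambda>k. f k * ln (f k)) - g0 * ln g0) + p * (En p n (\<lambda>k. fS k * ln (fS k)) - g1 * ln g1)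
       + ((1-p) * (g0 * ln g0) + p * (g1 * ln g1) - ((1-p)*g0 + p*g1) * ln ((1-p)*g0 + p*g1))"
    unfolding E1 E2 right_diff_distrib by linarith
  also have "\<dots> \<le> (1-p)*(c*Phi f) + p*(c*Phi fS) + p*Phi f"
  proof -
    have "(1-p) * (En p n (\<lambda>k. f k * ln (f k)) - g0 * ln g0) \<le> (1-p)*(c*Phi f)"
      using IH1 p by (intro mult_left_mono) auto
    moreover have "p * (En p n (\<lambda>k. fS k * ln (fS k)) - g1 * ln g1) \<le> p*(c*Phi fS)"
      using IH2 p by (intro mult_left_mono) auto
    moreover have "p * ((g1-g0)^2 / g0) \<le> p * Phi f"
      using T p by (intro mult_left_mono) auto
    moreover have "p * (g1-g0)^2 / g0 = p * ((g1-g0)^2 / g0)" by simp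
    ultimately show ?thesis using B by linarith
  qed
  also have "\<dots> \<le> (real (Suc n) * p / (1-p)) * En p (Suc n) (\<lambda>k. (f (Suc k) - f k)^2 / f k)"
    unfolding c1 E3 by (rule step)
  finally show ?case .
qed

lemma choose_lim: "(\<lambda>n. real (n choose k) / real n ^ k) \<longlonglongrightarrow> 1 / fact k"
proof (induction k)
  case 0 show ?case by simp
next
  case (Suc k)
  have eq: "real (n choose Suc k) / real n ^ Suc k
      = (real (n choose k) / real n ^ k) * ((1 - real k / real n) / real (Suc k))" if "n > k" for n
  proof -
    have "Suc k * (n choose Suc k) = (n - k) * (n choose k)"
      using binomial_absorption binomial_absorb_comp by metis
    then have "real (Suc k * (n choose Suc k)) = real ((n - k) * (n choose k))" by simp
    then have h: "real (Suc k) * real (n choose Suc k) = (real n - real k) * real (n choose k)"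
      using that by (simp add: of_nat_diff algebra_simps)
    have np: "real n > 0" using that by simp
    have "(real (n choose k) / real n ^ k) * ((1 - real k / real n) / real (Suc k))
       = ((real n - real k) * real (n choose k)) / (real n ^ Suc k * real (Suc k))"
      using np by (simp add: field_simps)
    also have "\<dots> = (real (Suc k) * real (n choose Suc k)) / (real n ^ Suc k * real (Suc k))"
      by (simp only: h)
    also have "\<dots> = real (n choose Suc k) / real n ^ Suc k"
      by (simp del: of_nat_Suc)
    finally show ?thesis by simp
  qed
  have lim: "(\<lambda>n. (real (n choose k) / real n ^ k) * ((1 - real k / real n) / real (Suc k)))
      \<longlonglongrightarrow> 1 / fact k * ((1 - 0) / real (Suc k))"
    by (rule tendsto_mult[OF Suc.IH]) (intro tendsto_intros, simp)
  have ev: "eventually (\<lambda>n. (real (n choose k) / real n ^ k) * ((1 - real k / real n) / real (Suc k))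
      = real (n choose Suc k) / real n ^ Suc k) sequentially"
    using eventually_gt_at_top[of k] by eventually_elim (rule eq[symmetric])
  have "(\<lambda>n. real (n choose Suc k) / real n ^ Suc k) \<longlonglongrightarrow> 1 / fact k * ((1 - 0) / real (Suc k))"
    by (rule tendsto_cong[OF ev, THEN iffD1, OF lim])
  then show ?case by (simp add: field_simps)
qed

lemma Bn_lim:
  assumes mu: "\<mu> > 0"
  shows "(\<lambda>n. Bn (\<mu> / real n) n k) \<longlonglongrightarrow> poisson \<mu> k"
proof -
  have ev: "eventually (\<lambda>n. (real (n choose k) / real n ^ k) * \<mu>^k * ((1 + (-\<mu>)/real n)^n / (1 - \<mu>/real n)^k)
      = Bn (\<mu> / real n) n k) sequentially"
    using eventually_ge_at_top[of "k + nat \<lceil>\<mu>\<rceil> + 1"]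
  proof eventually_elim
    case (elim n)
    have "\<mu> \<le> real (nat \<lceil>\<mu>\<rceil>)" by linarith
    then have nmu: "real n > \<mu>" using elim by linarith
    then have np: "real n > 0" using mu by linarith
    have ne: "1 - \<mu>/real n \<noteq> 0" using nmu np by (simp add: field_simps)
    have kn: "k \<le> n" using elim by simp
    have "Bn (\<mu> / real n) n k = real (n choose k) * (\<mu>^k / real n ^ k) * ((1 - \<mu>/real n)^n / (1 - \<mu>/real n)^k)"
      unfolding Bn_def using power_diff[OF ne kn] by (simp add: power_divide)
    then show ?case by (simp add: field_simps)
  qed
  have lim: "(\<lambda>n. (real (n choose k) / real n ^ k) * \<mu>^k * ((1 + (-\<mu>)/real n)^n / (1 - \<mu>/real n)^k))
      \<longlonglongrightarrow> (1 / fact k) * \<mu>^k * (exp (-\<mu>) / (1 - 0)^k)"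
    by (intro tendsto_intros choose_lim tendsto_exp_limit_sequentially) simp
  have "(\<lambda>n. Bn (\<mu> / real n) n k) \<longlonglongrightarrow> (1 / fact k) * \<mu>^k * (exp (-\<mu>) / (1 - 0)^k)"
    by (rule tendsto_cong[OF ev, THEN iffD1, OF lim])
  then show ?thesis by (simp add: poisson_def mult_ac)
qed

lemma poisson_pos: "\<mu> > 0 \<Longrightarrow> poisson \<mu> k > 0"
  by (simp add: poisson_def)

lemma FL:
  fixes f :: "nat \<Rightarrow> real" and \<mu> :: real and N :: nat
  assumes mu: "\<mu> > 0" and f0: "\<forall>k. 0 \<le> f k" and fd: "\<forall>k. f k = 0 \<longrightarrow> f (Suc k) = 0"
    and fN: "\<forall>k>N. f k = 0" and fpos: "f 0 > 0"
  shows "(\<Sum>k\<le>N. poisson \<mu> k * (f k * ln (f k)))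
      - (\<Sum>k\<le>N. poisson \<mu> k * f k) * ln (\<Sum>k\<le>N. poisson \<mu> k * f k)
    \<le> \<mu> * (\<Sum>k\<le>N. poisson \<mu> k * ((f (Suc k) - f k)^2 / f k))"
proof -
  define M where "M = N + nat \<lceil>\<mu>\<rceil> + 1"
  have red: "En (\<mu> / real n) n h = (\<Sum>k\<le>N. Bn (\<mu> / real n) n k * h k)"
    if "n \<ge> M" "\<forall>k>N. h k = 0" for n h
    unfolding En_def by (rule sum.mono_neutral_right) (use that in \<open>auto simp: M_def\<close>)
  have ineq: "(\<Sum>k\<le>N. Bn (\<mu> / real n) n k * (f k * ln (f k)))
      - (\<Sum>k\<le>N. Bn (\<mu> / real n) n k * f k) * ln (\<Sum>k\<le>N. Bn (\<mu> / real n) n k * f k)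
    \<le> (\<mu> / (1 - \<mu> / real n)) * (\<Sum>k\<le>N. Bn (\<mu> / real n) n k * ((f (Suc k) - f k)^2 / f k))"
    if n: "n \<ge> M" for n
  proof -
    have "\<mu> \<le> real (nat \<lceil>\<mu>\<rceil>)" by linarith
    then have nmu: "real n > \<mu>" using n unfolding M_def by linarith
    then have np: "real n > 0" using mu by linarith
    have p0: "0 < \<mu> / real n" using mu np by simp
    have p1: "\<mu> / real n < 1" using nmu np by (simp add: field_simps)
    have c: "real n * (\<mu> / real n) / (1 - \<mu> / real n) = \<mu> / (1 - \<mu> / real n)"
      using np by simp
    have z1: "\<forall>k>N. f k * ln (f k) = 0" using fN by simp
    have z2: "\<forall>k>N. (f (Suc k) - f k)^2 / f k = 0" using fN by simp
    show ?thesis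
      using BL[OF p0 p1 f0 fd, of n] unfolding c red[OF n z1] red[OF n fN] red[OF n z2] .
  qed
  define m where "m = (\<Sum>k\<le>N. poisson \<mu> k * f k)"
  have pn: "\<And>k. 0 \<le> poisson \<mu> k" using poisson_pos[OF mu] less_imp_le by blast
  have m0: "m > 0"
  proof -
    have "poisson \<mu> 0 * f 0 \<le> m" unfolding m_def
      by (rule member_le_sum) (use f0 pn in \<open>auto intro!: mult_nonneg_nonneg\<close>)
    moreover have "poisson \<mu> 0 * f 0 > 0" using fpos poisson_pos[OF mu] by simp
    ultimately show ?thesis by linarith
  qed
  have Bl: "(\<lambda>n. Bn (\<mu> / real n) n k) \<longlonglongrightarrow> poisson \<mu> k" for k by (rule Bn_lim[OF mu])
  have L1: "(\<lambda>n. (\<Sum>k\<le>N. Bn (\<mu> / real n) n k * (f k * ln (f k)))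
      - (\<Sum>k\<le>N. Bn (\<mu> / real n) n k * f k) * ln (\<Sum>k\<le>N. Bn (\<mu> / real n) n k * f k))
     \<longlonglongrightarrow> (\<Sum>k\<le>N. poisson \<mu> k * (f k * ln (f k))) - m * ln m"
    unfolding m_def using m0 unfolding m_def by (intro tendsto_intros Bl) auto
  have L2: "(\<lambda>n. (\<mu> / (1 - \<mu> / real n)) * (\<Sum>k\<le>N. Bn (\<mu> / real n) n k * ((f (Suc k) - f k)^2 / f k)))
     \<longlonglongrightarrow> (\<mu> / (1 - 0)) * (\<Sum>k\<le>N. poisson \<mu> k * ((f (Suc k) - f k)^2 / f k))"
    by (intro tendsto_intros Bl) auto
  have "(\<Sum>k\<le>N. poisson \<mu> k * (f k * ln (f k))) - m * ln m
      \<le> (\<mu> / (1 - 0)) * (\<Sum>k\<le>N. poisson \<mu> k * ((f (Suc k) - f k)^2 / f k))"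
    by (rule LIMSEQ_le[OF L1 L2]) (use ineq in blast)
  then show ?thesis unfolding m_def by simp
qed

lemma term_conv:
  assumes lam: "lam > 0" and q: "q0 = 0 \<longrightarrow> q1 = 0"
  shows "poisson lam k * ((q1 / poisson lam (Suc k) - q0 / poisson lam k)^2 / (q0 / poisson lam k))
       = ((real k + 1) * q1 / lam - q0)^2 / q0"
proof (cases "q0 = 0")
  case True then show ?thesis using q by simp
next
  case False
  define P0 where "P0 = poisson lam k"
  have P0: "P0 > 0" unfolding P0_def using poisson_pos[OF lam] .
  have P1: "poisson lam (Suc k) = P0 * lam / (real k + 1)"
    unfolding P0_def poisson_def by (simp add: field_simps)
  have d: "q1 / poisson lam (Suc k) - q0 / P0 = ((real k + 1) * q1 / lam - q0) / P0"
    unfolding P1 using P0 lam by (simp add: field_simps)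
  have "poisson lam k * ((q1 / poisson lam (Suc k) - q0 / poisson lam k)^2 / (q0 / poisson lam k))
      = P0 * ((((real k + 1) * q1 / lam - q0) / P0)^2 / (q0 / P0))"
    unfolding P0_def[symmetric] d ..
  also have "\<dots> = ((real k + 1) * q1 / lam - q0)^2 / q0"
    using P0 False by (simp add: power_divide field_simps power2_eq_square)
  finally show ?thesis .
qed

lemma plnp_ge:
  fixes p q :: real
  assumes "0 \<le> p" "0 < q"
  shows "p - q \<le> p * ln (p / q)"
proof (cases "p = 0")
  case True then show ?thesis using assms by simp
next
  case False
  then have p: "p > 0" using assms by simp
  have "ln (q/p) \<le> q/p - 1" using p assms by (intro ln_le_minus_one) auto
  moreover have "ln (p/q) = - ln (q/p)" using p assms by (simp add: ln_div)
  ultimately have "p * (- ln (p/q)) \<le> p * (q/p - 1)" using p by (intro mult_left_mono) auto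
  also have "\<dots> = q - p" using p by (simp add: field_simps)
  finally show ?thesis by simp
qed

theorem proposition2:
  fixes P :: "nat pmf" and lam :: real
  assumes "integrable (measure_pmf P) real"
    and "lam = measure_pmf.expectation P real"
    and "lam > 0"
    and "(\<forall>k. pmf P k > 0) \<or> (\<exists>N. \<forall>k>N. pmf P k = 0)"
  shows "rel_entropy (pmf P) (poisson lam) \<le> enn2ereal (scaled_fisher (pmf P) lam)"
proof -
  have lam: "lam > 0" using assms(3) .
  have pos: "\<And>k. poisson lam k > 0" using poisson_pos[OF lam] .
  have pne: "\<And>k. poisson lam k \<noteq> 0" using pos by (metis less_irrefl)
  show ?thesis
  proof (cases "\<exists>x. pmf P x = 0 \<and> pmf P (Suc x) > 0")
    case True
    then obtain x where x: "pmf P x = 0" "pmf P (Suc x) > 0" by blast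
    have "sfi_term (pmf P) lam x = top"
    proof -
      have "(real x + 1) * pmf P (x+1) / lam > 0" using x lam by (intro divide_pos_pos mult_pos_pos) auto
      then have "((real x + 1) * pmf P (x+1) / lam - pmf P x)^2 \<noteq> 0" using x lam by simp
      then show ?thesis unfolding sfi_term_def Let_def using x by simp
    qed
    note xtop = this
    have ntop: "\<not> (\<Sum>x. sfi_term (pmf P) lam x) < top"
    proof
      assume "(\<Sum>x. sfi_term (pmf P) lam x) < top"
      then have "sfi_term (pmf P) lam x < top" by (rule ennreal_suminf_lessD)
      then show False using xtop by simp
    qed
    have "\<not> ((\<Sum>x. sfi_term (pmf P) lam x) \<noteq> top)"
      using ntop unfolding top.not_eq_extremum .
    then have "(\<Sum>x. sfi_term (pmf P) lam x) = top" by simp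
    then have "scaled_fisher (pmf P) lam = top" unfolding scaled_fisher_def using lam by (simp add: ennreal_mult_top)
    then show ?thesis by simp
  next
    case False
    have dc: "\<forall>k. pmf P k = 0 \<longrightarrow> pmf P (Suc k) = 0"
    proof (intro allI impI)
      fix k assume "pmf P k = 0"
      then have "\<not> pmf P (Suc k) > 0" using False by blast
      then show "pmf P (Suc k) = 0" using pmf_nonneg[of P "Suc k"] by linarith
    qed
    have p0: "pmf P 0 > 0"
    proof (rule ccontr)
      assume "\<not> pmf P 0 > 0"
      then have z: "pmf P 0 = 0" using pmf_nonneg[of P 0] by linarith
      have "pmf P k = 0" for k by (induction k) (use z dc in auto)
      then have "set_pmf P = {}" by (auto simp: set_pmf_eq)
      then show False using set_pmf_not_empty by blast
    qed
    define t where "t k = ((real k + 1) * pmf P (k+1) / lam - pmf P k)^2 / pmf P k" for k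
    have t0: "0 \<le> t k" for k unfolding t_def by simp
    have sfi: "sfi_term (pmf P) lam k = ennreal (t k)" for k
    proof (cases "pmf P k = 0")
      case True
      then have "pmf P (k+1) = 0" using dc by simp
      then show ?thesis using True unfolding sfi_term_def Let_def t_def by simp
    next
      case False then show ?thesis unfolding sfi_term_def Let_def t_def by simp
    qed
    show ?thesis
    proof (cases "summable t")
      case False
      have "(\<Sum>k. ennreal (t k)) = top"
      proof (rule ccontr)
        assume "(\<Sum>k. ennreal (t k)) \<noteq> top"
        then have "summable t" by (rule summable_suminf_not_top[OF t0])
        then show False using False by contradiction
      qed
      then have st: "(\<Sum>k. sfi_term (pmf P) lam k) = top" by (simp only: sfi)
      have ln0: "ennreal lam \<noteq> 0" using lam by simp
      have "scaled_fisher (pmf P) lam = ennreal lam * top" by (simp only: scaled_fisher_def st)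
      also have "\<dots> = top" using ln0 by (simp only: ennreal_mult_top if_False)
      finally have "scaled_fisher (pmf P) lam = top" .
      then show ?thesis by simp
    next
      case True
      define T where "T = suminf t"
      have T0: "0 \<le> T" unfolding T_def by (rule suminf_nonneg[OF True t0])
      have "(\<Sum>k. ennreal (t k)) = ennreal T" unfolding T_def by (rule suminf_ennreal2[OF t0 True])
      then have st: "(\<Sum>k. sfi_term (pmf P) lam k) = ennreal T" by (simp only: sfi)
      have "scaled_fisher (pmf P) lam = ennreal lam * ennreal T" by (simp only: scaled_fisher_def st)
      also have "\<dots> = ennreal (lam * T)" by (rule ennreal_mult[OF less_imp_le[OF lam] T0, symmetric])
      finally have SF: "scaled_fisher (pmf P) lam = ennreal (lam * T)" .
      define a where "a k = pmf P k * ln (pmf P k / poisson lam k)" for k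
      define S where "S N = (\<Sum>k\<le>N. pmf P k)" for N
      have key: "(\<Sum>k\<le>N. a k) - S N * ln (S N) \<le> lam * T + lam * pmf P N" for N
      proof -
        define f where "f k = (if k \<le> N then pmf P k else 0) / poisson lam k" for k
        have f0: "\<forall>k. 0 \<le> f k" unfolding f_def using pos by (simp add: less_imp_le)
        have fd: "\<forall>k. f k = 0 \<longrightarrow> f (Suc k) = 0"
          unfolding f_def using dc pne by auto
        have fN: "\<forall>k>N. f k = 0" unfolding f_def by simp
        have fpos: "f 0 > 0" unfolding f_def using p0 pos by simp
        note F = FL[OF lam f0 fd fN fpos]
        have e1: "(\<Sum>k\<le>N. poisson lam k * (f k * ln (f k))) = (\<Sum>k\<le>N. a k)"
          by (rule sum.cong) (auto simp: f_def a_def pne)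
        have e2: "(\<Sum>k\<le>N. poisson lam k * f k) = S N"
          unfolding S_def by (rule sum.cong) (auto simp: f_def pne)
        have e3: "(\<Sum>k\<le>N. poisson lam k * ((f (Suc k) - f k)^2 / f k)) = (\<Sum>k<N. t k) + pmf P N"
        proof -
          have "(\<Sum>k\<le>N. poisson lam k * ((f (Suc k) - f k)^2 / f k))
              = (\<Sum>k<Suc N. poisson lam k * ((f (Suc k) - f k)^2 / f k))"
            by (simp add: lessThan_Suc_atMost)
          also have "\<dots> = (\<Sum>k<N. poisson lam k * ((f (Suc k) - f k)^2 / f k))
              + poisson lam N * ((f (Suc N) - f N)^2 / f N)" by simp
          also have "(\<Sum>k<N. poisson lam k * ((f (Suc k) - f k)^2 / f k)) = (\<Sum>k<N. t k)"
          proof (rule sum.cong)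
            fix k assume "k \<in> {..<N}"
            then have kN: "k < N" by simp
            have "poisson lam k * ((f (Suc k) - f k)^2 / f k)
               = poisson lam k * ((pmf P (Suc k) / poisson lam (Suc k) - pmf P k / poisson lam k)^2
                   / (pmf P k / poisson lam k))"
              unfolding f_def using kN by simp
            also have "\<dots> = ((real k + 1) * pmf P (Suc k) / lam - pmf P k)^2 / pmf P k"
              by (rule term_conv[OF lam]) (use dc in auto)
            finally show "poisson lam k * ((f (Suc k) - f k)^2 / f k) = t k" by (simp add: t_def)
          qed simp
          also have "poisson lam N * ((f (Suc N) - f N)^2 / f N) = pmf P N"
          proof (cases "pmf P N = 0")
            case True then show ?thesis by (simp add: f_def)
          next
            case False
            then have "f N \<noteq> 0" unfolding f_def using pne by simp
            then have "(f (Suc N) - f N)^2 / f N = f N" by (simp add: f_def power2_eq_square)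
            then show ?thesis by (simp add: f_def pne)
          qed
          finally show ?thesis .
        qed
        have "(\<Sum>k<N. t k) \<le> T" unfolding T_def by (rule sum_le_suminf[OF True]) (auto simp: t0)
        then have "lam * ((\<Sum>k<N. t k) + pmf P N) \<le> lam * (T + pmf P N)" using lam by simp
        then show ?thesis using F unfolding e1 e2 e3 by (simp add: algebra_simps)
      qed
      have Pe: "poisson lam = (\<lambda>k. exp (-lam) * (inverse (fact k) * lam ^ k))"
        by (auto simp: poisson_def fun_eq_iff divide_inverse)
      have Ps: "summable (poisson lam)" unfolding Pe by (intro summable_mult summable_exp)
      have pinf: "infsum (pmf P) UNIV = 1"
        using infsetsum_infsum[OF pmf_abs_summable, of P UNIV] infsetsum_pmf_eq_1[of P UNIV] by simp
      have psu: "pmf P summable_on UNIV"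
      proof (rule ccontr)
        assume "\<not> pmf P summable_on UNIV"
        then have "infsum (pmf P) UNIV = 0" by (rule infsum_not_exists)
        then show False using pinf by simp
      qed
      have "(pmf P has_sum 1) UNIV" using has_sum_infsum[OF psu] unfolding pinf .
      then have ps: "pmf P sums 1" by (rule has_sum_imp_sums)
      have ab: "0 \<le> a k + poisson lam k" for k
        using plnp_ge[OF pmf_nonneg pos, of P k k] pmf_nonneg[of P k] unfolding a_def by linarith
      have S1: "S N \<le> 1" for N
        unfolding S_def using sum_le_suminf[OF sums_summable[OF ps], of "{..N}"] sums_unique[OF ps] by simp
      have Sp: "S N > 0" for N
      proof -
        have "pmf P 0 \<le> S N" unfolding S_def by (rule member_le_sum) auto
        then show ?thesis using p0 by linarith
      qed
      have bnd: "(\<Sum>k\<le>N. a k + poisson lam k) \<le> lam * T + lam + suminf (poisson lam)" for N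
      proof -
        have "S N * ln (S N) \<le> 0" using S1[of N] Sp[of N] by (simp add: mult_nonneg_nonpos)
        moreover have "lam * pmf P N \<le> lam" using lam pmf_le_1[of P N] by simp
        moreover have "(\<Sum>k\<le>N. poisson lam k) \<le> suminf (poisson lam)"
          by (rule sum_le_suminf[OF Ps]) (auto simp: less_imp_le pos)
        ultimately show ?thesis using key[of N] by (simp add: sum.distrib)
      qed
      have sb: "summable (\<lambda>k. a k + poisson lam k)" by (rule bounded_imp_summable[OF ab bnd])
      have sa: "summable a" using summable_diff[OF sb Ps] by simp
      have nsa: "summable (\<lambda>k. norm (a k))"
      proof (rule summable_comparison_test'[of "\<lambda>k. (a k + poisson lam k) + poisson lam k" 0])
        show "summable (\<lambda>k. (a k + poisson lam k) + poisson lam k)" by (rule summable_add[OF sb Ps])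
        fix k show "norm (norm (a k)) \<le> (a k + poisson lam k) + poisson lam k"
          using ab[of k] pos[of k] by simp
      qed
      have hs: "(a has_sum suminf a) UNIV" by (rule norm_summable_imp_has_sum[OF nsa summable_sums[OF sa]])
      have aeq: "(\<lambda>x. pmf P x * ln (pmf P x / poisson lam x)) = a" by (simp add: a_def fun_eq_iff)
      have RE: "rel_entropy (pmf P) (poisson lam) = ereal (suminf a)"
      proof -
        have n: "\<not> (\<exists>x. pmf P x > 0 \<and> poisson lam x = 0)" using pne by blast
        have su: "a summable_on UNIV" using hs by (rule has_sum_imp_summable)
        have iv: "infsum a UNIV = suminf a" using hs by (rule infsumI)
        show ?thesis unfolding rel_entropy_def aeq using n su iv by simp
      qed
      have X: "(\<lambda>N. \<Sum>k\<le>N. a k) \<longlonglongrightarrow> suminf a" by (rule summable_LIMSEQ'[OF sa])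
      have pz: "(\<lambda>N. pmf P N) \<longlonglongrightarrow> 0" by (rule summable_LIMSEQ_zero[OF sums_summable[OF ps]])
      have Sl: "S \<longlonglongrightarrow> 1"
        using summable_LIMSEQ'[OF sums_summable[OF ps]] sums_unique[OF ps] unfolding S_def[abs_def] by simp
      have Y: "(\<lambda>N. lam * T + lam * pmf P N + S N * ln (S N)) \<longlonglongrightarrow> lam * T + lam * 0 + 1 * ln 1"
        by (intro tendsto_intros pz Sl) auto
      have "suminf a \<le> lam * T + lam * 0 + 1 * ln 1"
        by (rule LIMSEQ_le[OF X Y]) (use key in \<open>auto simp: algebra_simps\<close>)
      then have "suminf a \<le> lam * T" by simp
      then show ?thesis unfolding RE SF using lam T0 by simp
    qed
  qed
qed

end
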